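(* Let $(X,d)$ be a complete metric space and let $f:\ell_\infty(X)\to X$ satisfy one of the conditions (Q) $L_{s,q}(f)<1$ for some $q\in(0,1)$; (P) $L_{p,q}(f)<(1-q)^{1/p}$ for some $q\in(0,1)$ and $p\in[1,\infty)$. Then $f$ has a generalized contractive fixed point $x_*$. Moreover, for every $x\in\ell_\infty(X)$, with $(x^k)$ the generalized iterates of $f$ at $x$ and $\tilde{x}^0=x$, $\tilde{x}^1=\tilde f(x)$, and every $k\in\mathbb{N}$ (i.e. $k\geq 1$): (i) if $L_{s,q}(f)<1$ for some $q\in(0,1)$, then $$d(x^k,x_* )\le L_{s,q}(f)\frac{\max\{L_{s,q}(f),q\}^{k-1}}{1-\max\{L_{s,q}(f),q\}}\,d_{s,q}(\tilde{x}^1,\tilde{x}^0);$$ (ii) if $L_{p,q}(f)<(1-q)^{1/p}$ for some $q\in(0,1)$, $p\in[1,\infty)$, then $$d(x^k,x_* )\le L_{p,q}(f)\frac{\left((L_{p,q}(f))^p+q\right)^{\frac{k-1}{p}}}{1-\left((L_{p,q}(f))^p+q\right)^{\frac1p}}\,d_{p,q}(\tilde{x}^1,\tilde{x}^0).$$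
   Context: $\mathbb{N}^*=\{0,1,2,\dots\}$; $\ell_\infty(X)$ is the set of all bounded sequences $(x_n)_{n\in\mathbb{N}^*}$ in $X$. For $q\in(0,1]$, $d_{s,q}(x,y):=\sup\{q^n d(x_n,y_n):n\in\mathbb{N}^*\}$; for $q\in(0,1)$, $p\in[1,\infty)$, $d_{p,q}(x,y):=\left(\sum_{n=0}^\infty q^n d^p(x_n,y_n)\right)^{1/p}$. $L_{s,q}(f)$, $L_{p,q}(f)$ are the Lipschitz constants of $f$ with respect to $d_{s,q}$, resp. $d_{p,q}$, on $\ell_\infty(X)$ and $d$ on $X$. $\tilde f:\ell_\infty(X)\to\ell_\infty(X)$ is $\tilde f((x_n))=(f((x_n)),x_0,x_1,\dots)$. For $x\in\ell_\infty(X)$: $\tilde{x}^0:=x$, and for $k\ge1$, $x^k:=f(\tilde{x}^{k-1})$, $\tilde{x}^k:=\tilde f(\tilde{x}^{k-1})$; $(x^k)$ is the sequence of generalized iterates of $f$ at $x$. A generalized fixed point of $f$ is $x_*\in X$ with $f(x_*,x_*,\dots)=x_*$; it is a generalized contractive fixed point (GCFP) if for every $x\in\ell_\infty(X)$ the generalized iterates of $f$ at $x$ converge to $x_*$. *)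

theory Defs
  imports "HOL-Analysis.Analysis"
begin

definition linf :: "(nat \<Rightarrow> 'a::metric_space) set" where
  "linf = {x. bounded (range x)}"

definition d_sq :: "real \<Rightarrow> (nat \<Rightarrow> 'a::metric_space) \<Rightarrow> (nat \<Rightarrow> 'a) \<Rightarrow> real" where
  "d_sq q x y = (SUP n. q ^ n * dist (x n) (y n))"

definition d_pq :: "real \<Rightarrow> real \<Rightarrow> (nat \<Rightarrow> 'a::metric_space) \<Rightarrow> (nat \<Rightarrow> 'a) \<Rightarrow> real" where
  "d_pq p q x y = (\<Sum>n. q ^ n * (dist (x n) (y n)) powr p) powr (1 / p)"

text \<open>Lipschitz constant of f w.r.t. a metric D on ell_infty(X) and dist on X
  (smallest Lipschitz constant; +infinity if f is not Lipschitz).\<close>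
definition lip_const :: "((nat \<Rightarrow> 'a::metric_space) \<Rightarrow> (nat \<Rightarrow> 'a) \<Rightarrow> real) \<Rightarrow> ((nat \<Rightarrow> 'a) \<Rightarrow> 'a) \<Rightarrow> ereal" where
  "lip_const D f = Inf {ereal L | L. 0 \<le> L \<and> (\<forall>x\<in>linf. \<forall>y\<in>linf. dist (f x) (f y) \<le> L * D x y)}"

definition L_sq :: "real \<Rightarrow> ((nat \<Rightarrow> 'a::metric_space) \<Rightarrow> 'a) \<Rightarrow> ereal" where
  "L_sq q f = lip_const (d_sq q) f"

definition L_pq :: "real \<Rightarrow> real \<Rightarrow> ((nat \<Rightarrow> 'a::metric_space) \<Rightarrow> 'a) \<Rightarrow> ereal" where
  "L_pq p q f = lip_const (d_pq p q) f"

definition ftilde :: "((nat \<Rightarrow> 'a) \<Rightarrow> 'a) \<Rightarrow> (nat \<Rightarrow> 'a) \<Rightarrow> (nat \<Rightarrow> 'a)" where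
  "ftilde f x = (\<lambda>n. case n of 0 \<Rightarrow> f x | Suc m \<Rightarrow> x m)"

definition xtilde :: "((nat \<Rightarrow> 'a) \<Rightarrow> 'a) \<Rightarrow> (nat \<Rightarrow> 'a) \<Rightarrow> nat \<Rightarrow> (nat \<Rightarrow> 'a)" where
  "xtilde f x k = (ftilde f ^^ k) x"

definition gen_iter :: "((nat \<Rightarrow> 'a) \<Rightarrow> 'a) \<Rightarrow> (nat \<Rightarrow> 'a) \<Rightarrow> nat \<Rightarrow> 'a" where
  "gen_iter f x k = f (xtilde f x (k - 1))"

definition gen_fixed_point :: "((nat \<Rightarrow> 'a) \<Rightarrow> 'a) \<Rightarrow> 'a \<Rightarrow> bool" where
  "gen_fixed_point f z \<longleftrightarrow> f (\<lambda>_. z) = z"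

text \<open>Convergence of the iterates (indexed k = 1,2,...) to z.\<close>
definition GCFP :: "((nat \<Rightarrow> 'a::metric_space) \<Rightarrow> 'a) \<Rightarrow> 'a \<Rightarrow> bool" where
  "GCFP f z \<longleftrightarrow> gen_fixed_point f z \<and>
     (\<forall>x\<in>linf. (\<lambda>k. gen_iter f x (Suc k)) \<longlonglongrightarrow> z)"

end

theory Submission imports Defs begin

lemma linf_ftilde: "u \<in> linf \<Longrightarrow> ftilde f u \<in> linf"
proof -
  assume "u \<in> linf"
  hence "bounded (insert (f u) (range u))" by (simp add: linf_def)
  moreover have "range (ftilde f u) \<subseteq> insert (f u) (range u)"
    by (auto simp: ftilde_def split: nat.splits)
  ultimately show ?thesis unfolding linf_def using bounded_subset by blast
qed

lemma const_linf: "(\<lambda>_. z) \<in> linf" by (simp add: linf_def)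

lemma xtilde_Suc: "xtilde f x (Suc k) = ftilde f (xtilde f x k)"
  by (simp add: xtilde_def)

lemma xtilde_linf: "x \<in> linf \<Longrightarrow> xtilde f x k \<in> linf"
  by (induction k) (auto simp: xtilde_Suc linf_ftilde, simp add: xtilde_def)

lemma ftilde_const: "f (\<lambda>_. z) = z \<Longrightarrow> ftilde f (\<lambda>_. z) = (\<lambda>_. z)"
  by (auto simp: ftilde_def split: nat.splits)

lemma geom_tail:
  fixes a :: "nat \<Rightarrow> 'a::metric_space"
  assumes lim: "a \<longlonglongrightarrow> z" and st: "\<And>j. dist (a (Suc j)) (a j) \<le> c * r ^ j"
    and c: "0 \<le> c" and r: "0 \<le> r" "r < 1"
  shows "dist (a k) z \<le> c * r ^ k / (1 - r)"
proof -
  have h: "dist (a k) (a (k + m)) \<le> c * r ^ k * (1 - r ^ m) / (1 - r)" for m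
  proof (induction m)
    case 0 then show ?case by simp
  next
    case (Suc m)
    have "dist (a k) (a (k + Suc m)) \<le> dist (a k) (a (k + m)) + dist (a (Suc (k+m))) (a (k+m))"
      using dist_triangle dist_commute by (metis add_Suc_right dist_triangle2)
    also have "\<dots> \<le> c * r ^ k * (1 - r ^ m) / (1 - r) + c * r ^ (k+m)"
      using Suc st[of "k+m"] by linarith
    also have "\<dots> = c * r ^ k * (1 - r ^ Suc m) / (1 - r)"
      using r by (simp add: field_simps power_add)
    finally show ?case .
  qed
  have "(\<lambda>m. dist (a k) (a (k + m))) \<longlonglongrightarrow> dist (a k) z"
    using LIMSEQ_ignore_initial_segment[OF lim, of k] by (intro tendsto_intros) (simp_all add: add.commute)
  moreover have "dist (a k) (a (k + m)) \<le> c * r ^ k / (1 - r)" for m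
  proof -
    have "c * r ^ k * (1 - r ^ m) \<le> c * r ^ k"
      using c r by (simp add: mult_left_le zero_le_power)
    hence "c * r ^ k * (1 - r ^ m) / (1 - r) \<le> c * r ^ k / (1 - r)"
      using r by (simp add: divide_right_mono)
    thus ?thesis using h[of m] by linarith
  qed
  ultimately show ?thesis by (intro LIMSEQ_le_const2) auto
qed

lemma framework:
  fixes f :: "(nat \<Rightarrow> 'a::metric_space) \<Rightarrow> 'a" and D :: "(nat \<Rightarrow> 'a) \<Rightarrow> (nat \<Rightarrow> 'a) \<Rightarrow> real"
  assumes Dnn: "\<And>u v. u\<in>linf \<Longrightarrow> v\<in>linf \<Longrightarrow> 0 \<le> D u v"
  and lipf: "\<And>u v. u\<in>linf \<Longrightarrow> v\<in>linf \<Longrightarrow> dist (f u) (f v) \<le> L * D u v"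
  and lipt: "\<And>u v. u\<in>linf \<Longrightarrow> v\<in>linf \<Longrightarrow> D (ftilde f u) (ftilde f v) \<le> M * D u v"
  and L0: "0 \<le> L" and M0: "0 \<le> M" and M1: "M < 1"
  and fp: "f (\<lambda>_. z) = z" and x: "x \<in> linf"
  shows "(\<lambda>k. gen_iter f x (Suc k)) \<longlonglongrightarrow> z"
    and "\<And>k. k \<ge> 1 \<Longrightarrow> dist (gen_iter f x k) z \<le> L * M^(k-1)/(1-M) * D (xtilde f x 1) (xtilde f x 0)"
proof -
  note xt = xtilde_linf[OF x]
  have e: "D (xtilde f x k) (\<lambda>_. z) \<le> M^k * D x (\<lambda>_. z)" for k
  proof (induction k)
    case 0 then show ?case by (simp add: xtilde_def)
  next
    case (Suc k)
    have "D (xtilde f x (Suc k)) (\<lambda>_. z) = D (ftilde f (xtilde f x k)) (ftilde f (\<lambda>_. z))"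
      by (simp add: xtilde_Suc ftilde_const[of f z, OF fp])
    also have "\<dots> \<le> M * D (xtilde f x k) (\<lambda>_. z)" by (rule lipt[OF xt const_linf])
    also have "\<dots> \<le> M * (M^k * D x (\<lambda>_. z))" using Suc M0 by (rule mult_left_mono)
    finally show ?case by simp
  qed
  have d1: "dist (gen_iter f x (Suc k)) z \<le> L * (M^k * D x (\<lambda>_. z))" for k
  proof -
    have "dist (gen_iter f x (Suc k)) z = dist (f (xtilde f x k)) (f (\<lambda>_. z))"
      by (simp add: gen_iter_def fp)
    also have "\<dots> \<le> L * D (xtilde f x k) (\<lambda>_. z)" by (rule lipf[OF xt const_linf])
    also have "\<dots> \<le> L * (M^k * D x (\<lambda>_. z))" using e L0 by (rule mult_left_mono)
    finally show ?thesis .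
  qed
  have "(\<lambda>k. L * (M^k * D x (\<lambda>_. z))) \<longlonglongrightarrow> 0"
    using M0 M1 by (intro tendsto_mult_right_zero tendsto_mult_left_zero LIMSEQ_power_zero) simp
  hence "(\<lambda>k. dist (gen_iter f x (Suc k)) z) \<longlonglongrightarrow> 0"
    by (rule Lim_null_comparison[rotated]) (use d1 in \<open>auto intro: always_eventually\<close>)
  thus lim: "(\<lambda>k. gen_iter f x (Suc k)) \<longlonglongrightarrow> z" using tendsto_dist_iff by blast
  have dl: "D (xtilde f x (Suc k)) (xtilde f x k) \<le> M^k * D (xtilde f x 1) (xtilde f x 0)" for k
  proof (induction k)
    case 0 then show ?case by simp
  next
    case (Suc k)
    have "D (xtilde f x (Suc (Suc k))) (xtilde f x (Suc k)) = D (ftilde f (xtilde f x (Suc k))) (ftilde f (xtilde f x k))"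
      by (simp only: xtilde_Suc)
    also have "\<dots> \<le> M * D (xtilde f x (Suc k)) (xtilde f x k)" by (rule lipt[OF xt xt])
    also have "\<dots> \<le> M * (M^k * D (xtilde f x 1) (xtilde f x 0))" using Suc M0 by (rule mult_left_mono)
    finally show ?case by simp
  qed
  define c where "c = L * D (xtilde f x 1) (xtilde f x 0)"
  have c0: "0 \<le> c" unfolding c_def using L0 Dnn[OF xt xt] by simp
  have st: "dist (gen_iter f x (Suc (Suc j))) (gen_iter f x (Suc j)) \<le> c * M ^ j" for j
  proof -
    have "dist (gen_iter f x (Suc (Suc j))) (gen_iter f x (Suc j)) = dist (f (xtilde f x (Suc j))) (f (xtilde f x j))"
      by (simp add: gen_iter_def)
    also have "\<dots> \<le> L * D (xtilde f x (Suc j)) (xtilde f x j)" by (rule lipf[OF xt xt])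
    also have "\<dots> \<le> L * (M^j * D (xtilde f x 1) (xtilde f x 0))" using dl L0 by (rule mult_left_mono)
    finally show ?thesis by (simp add: c_def ac_simps)
  qed
  fix k :: nat assume k: "k \<ge> 1"
  then obtain j where j: "k = Suc j" by (cases k) auto
  have "dist (gen_iter f x (Suc j)) z \<le> c * M ^ j / (1 - M)"
    by (rule geom_tail[where a="\<lambda>k. gen_iter f x (Suc k)", OF lim st c0 M0 M1])
  thus "dist (gen_iter f x k) z \<le> L * M^(k-1)/(1-M) * D (xtilde f x 1) (xtilde f x 0)"
    by (simp add: j c_def ac_simps)
qed

lemma lip_attained:
  fixes f :: "(nat \<Rightarrow> 'a::metric_space) \<Rightarrow> 'a" and D :: "(nat \<Rightarrow> 'a) \<Rightarrow> (nat \<Rightarrow> 'a) \<Rightarrow> real"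
  assumes Dnn: "\<And>u v. u\<in>linf \<Longrightarrow> v\<in>linf \<Longrightarrow> 0 \<le> D u v"
    and lt: "lip_const D f < ereal B"
  shows "0 \<le> real_of_ereal (lip_const D f)" "real_of_ereal (lip_const D f) < B"
    "\<And>x y. x\<in>linf \<Longrightarrow> y\<in>linf \<Longrightarrow> dist (f x) (f y) \<le> real_of_ereal (lip_const D f) * D x y"
proof -
  define S where "S = {ereal L | L. 0 \<le> L \<and> (\<forall>x\<in>linf. \<forall>y\<in>linf. dist (f x) (f y) \<le> L * D x y)}"
  have ld: "lip_const D f = Inf S" unfolding S_def lip_const_def ..
  have ge: "0 \<le> Inf S" unfolding S_def by (rule Inf_greatest) auto
  obtain r where r: "Inf S = ereal r" using ge lt ld by (cases "Inf S") auto
  have rr: "real_of_ereal (lip_const D f) = r" using ld r by simp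
  show "0 \<le> real_of_ereal (lip_const D f)" using ge r rr by simp
  show "real_of_ereal (lip_const D f) < B" using lt ld r rr by simp
  fix x y :: "nat \<Rightarrow> 'a" assume x: "x\<in>linf" and y: "y\<in>linf"
  show "dist (f x) (f y) \<le> real_of_ereal (lip_const D f) * D x y"
  proof (rule ccontr)
    assume "\<not> ?thesis"
    hence gt: "r * D x y < dist (f x) (f y)" using rr by simp
    have D0: "0 \<le> D x y" using Dnn x y .
    show False
    proof (cases "D x y = 0")
      case True
      from r have "Inf S < ereal (r+1)" by simp
      then obtain L where "ereal L \<in> S" by (auto simp: Inf_less_iff S_def)
      hence "dist (f x) (f y) \<le> L * D x y" using x y by (auto simp: S_def)
      thus False using gt True by simp
    next
      case False
      hence Dp: "0 < D x y" using D0 by simp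
      have "r < dist (f x) (f y) / D x y" using gt Dp by (simp add: field_simps)
      hence "Inf S < ereal (dist (f x) (f y) / D x y)" using r by simp
      then obtain s where s: "s \<in> S" "s < ereal (dist (f x) (f y) / D x y)"
        by (auto simp: Inf_less_iff)
      then obtain L where L: "s = ereal L" "\<forall>x\<in>linf. \<forall>y\<in>linf. dist (f x) (f y) \<le> L * D x y"
        by (auto simp: S_def)
      have "L < dist (f x) (f y) / D x y" using s L by simp
      hence "L * D x y < dist (f x) (f y)" using Dp by (simp add: field_simps)
      thus False using L x y by force
    qed
  qed
qed

lemma linf_dist_bdd:
  assumes "u \<in> linf" "v \<in> linf"
  obtains B where "\<And>n. dist (u n) (v n) \<le> B"
proof -
  have b1: "bounded (range u)" "bounded (range v)" using assms by (auto simp: linf_def)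
  obtain e1 where e1: "\<forall>y\<in>range u. dist (u 0) y \<le> e1"
    using b1(1) bounded_any_center[of "range u" "u 0"] by blast
  obtain e2 where e2: "\<forall>y\<in>range v. dist (u 0) y \<le> e2"
    using b1(2) bounded_any_center[of "range v" "u 0"] by blast
  have "dist (u n) (v n) \<le> e1 + e2" for n
    using dist_triangle3[of "u n" "v n" "u 0"] e1 e2 by (smt (verit, best) dist_commute dist_triangle rangeI)
  thus ?thesis using that by blast
qed

lemma sq_bdd:
  assumes "u \<in> linf" "v \<in> linf" "0 < q" "q \<le> 1"
  shows "bdd_above (range (\<lambda>n. q^n * dist (u n) (v n)))"
proof -
  obtain B where B: "\<And>n. dist (u n) (v n) \<le> B" using linf_dist_bdd assms by blast
  have "q^n * dist (u n) (v n) \<le> B" for n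
  proof -
    have "q^n \<le> 1" using assms by (simp add: power_le_one)
    hence "q^n * dist (u n) (v n) \<le> 1 * dist (u n) (v n)"
      by (intro mult_right_mono) auto
    thus ?thesis using B[of n] by simp
  qed
  thus ?thesis by (intro bdd_aboveI2) auto
qed

lemma sq_upper:
  assumes "u \<in> linf" "v \<in> linf" "0 < q" "q \<le> 1"
  shows "q^n * dist (u n) (v n) \<le> d_sq q u v"
  unfolding d_sq_def by (rule cSUP_upper[OF _ sq_bdd[OF assms]]) simp

lemma sq_nonneg:
  assumes "u \<in> linf" "v \<in> linf" "0 < q" "q \<le> 1"
  shows "0 \<le> d_sq q u v"
  using sq_upper[OF assms, of 0] by (simp, meson order_trans zero_le_dist)

lemma sq_tilde:
  assumes u: "u \<in> linf" and v: "v \<in> linf" and q: "0 < q" "q \<le> 1" and L: "0 \<le> L"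
    and lf: "dist (f u) (f v) \<le> L * d_sq q u v"
  shows "d_sq q (ftilde f u) (ftilde f v) \<le> max L q * d_sq q u v"
  unfolding d_sq_def[of q "ftilde f u"]
proof (rule cSUP_least)
  fix n
  have D0: "0 \<le> d_sq q u v" using sq_nonneg[OF u v q] .
  show "q ^ n * dist (ftilde f u n) (ftilde f v n) \<le> max L q * d_sq q u v"
  proof (cases n)
    case 0
    have "L * d_sq q u v \<le> max L q * d_sq q u v" using D0 by (intro mult_right_mono) auto
    thus ?thesis using lf 0 by (simp add: ftilde_def)
  next
    case (Suc m)
    have "q ^ n * dist (ftilde f u n) (ftilde f v n) = q * (q^m * dist (u m) (v m))"
      using Suc by (simp add: ftilde_def)
    also have "\<dots> \<le> q * d_sq q u v" using sq_upper[OF u v q] q by (intro mult_left_mono) auto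
    also have "\<dots> \<le> max L q * d_sq q u v" using D0 by (intro mult_right_mono) auto
    finally show ?thesis .
  qed
qed simp

lemma sq_const:
  assumes q: "0 < q" "q \<le> 1"
  shows "d_sq q (\<lambda>_. w) (\<lambda>_. w') \<le> dist w w'"
  unfolding d_sq_def
proof (rule cSUP_least)
  fix n :: nat
  have "q^n \<le> 1" using q by (simp add: power_le_one)
  thus "q ^ n * dist w w' \<le> dist w w'" using q by (intro mult_left_le_one_le) auto
qed simp

lemma pq_summable:
  assumes u: "u \<in> linf" and v: "v \<in> linf" and q: "0 < q" "q < 1" and p: "0 < p"
  shows "summable (\<lambda>n. q^n * dist (u n) (v n) powr p)"
proof -
  obtain B where B: "\<And>n. dist (u n) (v n) \<le> B" using linf_dist_bdd u v by blast
  have "summable (\<lambda>n. B powr p * q^n)" using q by (intro summable_mult summable_geometric) simp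
  moreover have "norm (q^n * dist (u n) (v n) powr p) \<le> B powr p * q^n" for n
  proof -
    have "dist (u n) (v n) powr p \<le> B powr p" using B p by (intro powr_mono2) auto
    thus ?thesis using q by (simp add: mult.commute mult_right_mono)
  qed
  ultimately show ?thesis by (rule summable_comparison_test'[where N=0])
qed

lemma pq_tilde_sum:
  assumes u: "u \<in> linf" and v: "v \<in> linf" and q: "0 < q" "q < 1" and p: "0 < p"
  shows "(\<Sum>n. q^n * dist (ftilde f u n) (ftilde f v n) powr p) =
    dist (f u) (f v) powr p + q * (\<Sum>n. q^n * dist (u n) (v n) powr p)"
proof -
  let ?g = "\<lambda>n. q^n * dist (ftilde f u n) (ftilde f v n) powr p"
  have sg: "summable ?g" by (rule pq_summable[OF linf_ftilde[OF u] linf_ftilde[OF v] q p])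
  have "(\<Sum>n. ?g (Suc n)) = suminf ?g - ?g 0" by (rule suminf_split_head[OF sg])
  moreover have "(\<lambda>n. ?g (Suc n)) = (\<lambda>n. q * (q^n * dist (u n) (v n) powr p))"
    by (simp add: ftilde_def mult.assoc)
  moreover have "(\<Sum>n. q * (q^n * dist (u n) (v n) powr p)) = q * (\<Sum>n. q^n * dist (u n) (v n) powr p)"
    by (rule suminf_mult[OF pq_summable[OF u v q p]])
  ultimately show ?thesis by (simp add: ftilde_def)
qed

lemma pq_nonneg: "0 \<le> d_pq p q u v"
  unfolding d_pq_def by simp

lemma pq_tilde:
  assumes u: "u \<in> linf" and v: "v \<in> linf" and q: "0 < q" "q < 1" and p: "1 \<le> p" and L: "0 \<le> L"
    and lf: "dist (f u) (f v) \<le> L * d_pq p q u v"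
  shows "d_pq p q (ftilde f u) (ftilde f v) \<le> (L powr p + q) powr (1/p) * d_pq p q u v"
proof -
  have p0: "0 < p" using p by simp
  define S where "S = (\<Sum>n. q^n * dist (u n) (v n) powr p)"
  have S0: "0 \<le> S" unfolding S_def using q by (intro suminf_nonneg pq_summable[OF u v q p0]) auto
  have dS: "d_pq p q u v = S powr (1/p)" by (simp add: d_pq_def S_def)
  have "dist (f u) (f v) powr p \<le> (L * S powr (1/p)) powr p"
    using lf dS p0 by (intro powr_mono2) auto
  also have "\<dots> = L powr p * S"
    using L S0 p0 by (simp add: powr_mult powr_powr)
  finally have fp: "dist (f u) (f v) powr p \<le> L powr p * S" .
  have "d_pq p q (ftilde f u) (ftilde f v) = (dist (f u) (f v) powr p + q * S) powr (1/p)"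
    unfolding d_pq_def pq_tilde_sum[OF u v q p0] S_def ..
  also have "\<dots> \<le> ((L powr p + q) * S) powr (1/p)"
    using fp q S0 p0 by (intro powr_mono2) (auto simp: algebra_simps)
  also have "\<dots> = (L powr p + q) powr (1/p) * d_pq p q u v"
    using q S0 dS by (simp add: powr_mult)
  finally show ?thesis .
qed

lemma pq_const:
  assumes q: "0 < q" "q < 1" and p: "0 < p"
  shows "d_pq p q (\<lambda>_. w) (\<lambda>_. w') = dist w w' * (1/(1-q)) powr (1/p)"
proof -
  have "(\<Sum>n. q^n * dist w w' powr p) = dist w w' powr p * (1/(1-q))"
    using q by (simp add: suminf_mult2[symmetric] summable_geometric suminf_geometric mult.commute)
  hence "d_pq p q (\<lambda>_. w) (\<lambda>_. w') = (dist w w' powr p * (1/(1-q))) powr (1/p)"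
    by (simp add: d_pq_def)
  also have "\<dots> = (dist w w' powr p) powr (1/p) * (1/(1-q)) powr (1/p)"
    by (rule powr_mult)
  also have "\<dots> = dist w w' * (1/(1-q)) powr (1/p)"
    using p by (simp add: powr_powr)
  finally show ?thesis .
qed

lemma sq_props:
  fixes f :: "(nat \<Rightarrow> 'a::metric_space) \<Rightarrow> 'a"
  assumes q: "0 < q" "q < 1" and lt: "L_sq q f < 1"
  shows "0 \<le> real_of_ereal (L_sq q f)" "real_of_ereal (L_sq q f) < 1"
    "\<And>u v. u\<in>linf \<Longrightarrow> v\<in>linf \<Longrightarrow> dist (f u) (f v) \<le> real_of_ereal (L_sq q f) * d_sq q u v"
proof -
  have Dnn: "\<And>u v :: nat \<Rightarrow> 'a. u\<in>linf \<Longrightarrow> v\<in>linf \<Longrightarrow> 0 \<le> d_sq q u v" using q by (intro sq_nonneg) auto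
  have lt': "lip_const (d_sq q) f < ereal 1" using lt by (simp add: L_sq_def one_ereal_def)
  note r = lip_attained[OF Dnn lt']
  show "0 \<le> real_of_ereal (L_sq q f)" "real_of_ereal (L_sq q f) < 1"
    "\<And>u v. u\<in>linf \<Longrightarrow> v\<in>linf \<Longrightarrow> dist (f u) (f v) \<le> real_of_ereal (L_sq q f) * d_sq q u v"
    using r by (auto simp: L_sq_def)
qed

lemma pq_props:
  fixes f :: "(nat \<Rightarrow> 'a::metric_space) \<Rightarrow> 'a"
  assumes q: "0 < q" "q < 1" and p: "1 \<le> p" and lt: "L_pq p q f < ereal ((1 - q) powr (1 / p))"
  shows "0 \<le> real_of_ereal (L_pq p q f)" "real_of_ereal (L_pq p q f) < (1 - q) powr (1 / p)"
    "\<And>u v. u\<in>linf \<Longrightarrow> v\<in>linf \<Longrightarrow> dist (f u) (f v) \<le> real_of_ereal (L_pq p q f) * d_pq p q u v"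
proof -
  have Dnn: "\<And>u v :: nat \<Rightarrow> 'a. u\<in>linf \<Longrightarrow> v\<in>linf \<Longrightarrow> 0 \<le> d_pq p q u v" by (rule pq_nonneg)
  have lt': "lip_const (d_pq p q) f < ereal ((1 - q) powr (1 / p))" using lt by (simp add: L_pq_def)
  note r = lip_attained[OF Dnn lt']
  show "0 \<le> real_of_ereal (L_pq p q f)" "real_of_ereal (L_pq p q f) < (1 - q) powr (1 / p)"
    "\<And>u v. u\<in>linf \<Longrightarrow> v\<in>linf \<Longrightarrow> dist (f u) (f v) \<le> real_of_ereal (L_pq p q f) * d_pq p q u v"
    using r by (auto simp: L_pq_def)
qed

lemma sq_main:
  fixes f :: "(nat \<Rightarrow> 'a::metric_space) \<Rightarrow> 'a"
  assumes q: "0 < q" "q < 1" and lt: "L_sq q f < 1" and fp: "f (\<lambda>_. z) = z" and x: "x \<in> linf"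
  shows "(\<lambda>k. gen_iter f x (Suc k)) \<longlonglongrightarrow> z"
    and "\<And>k. k \<ge> 1 \<Longrightarrow> dist (gen_iter f x k) z \<le> real_of_ereal (L_sq q f) * (max (real_of_ereal (L_sq q f)) q)^(k-1)/(1 - max (real_of_ereal (L_sq q f)) q) * d_sq q (xtilde f x 1) (xtilde f x 0)"
proof -
  note P = sq_props[OF q lt]
  have Dnn: "\<And>u v :: nat \<Rightarrow> 'a. u\<in>linf \<Longrightarrow> v\<in>linf \<Longrightarrow> 0 \<le> d_sq q u v" using q by (intro sq_nonneg) auto
  have lipt: "\<And>u v :: nat \<Rightarrow> 'a. u\<in>linf \<Longrightarrow> v\<in>linf \<Longrightarrow> d_sq q (ftilde f u) (ftilde f v) \<le> max (real_of_ereal (L_sq q f)) q * d_sq q u v"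
  proof -
    fix u v :: "nat \<Rightarrow> 'a" assume u: "u\<in>linf" and v: "v\<in>linf"
    show "d_sq q (ftilde f u) (ftilde f v) \<le> max (real_of_ereal (L_sq q f)) q * d_sq q u v"
      using q by (intro sq_tilde[OF u v] P(1) P(3)[OF u v]) auto
  qed
  have M0: "0 \<le> max (real_of_ereal (L_sq q f)) q" and M1: "max (real_of_ereal (L_sq q f)) q < 1"
    using P q by auto
  note F = framework[of "d_sq q" f "real_of_ereal (L_sq q f)" "max (real_of_ereal (L_sq q f)) q", OF Dnn P(3) lipt P(1) M0 M1 fp x]
  show "(\<lambda>k. gen_iter f x (Suc k)) \<longlonglongrightarrow> z" by (rule F(1))
  show "\<And>k. k \<ge> 1 \<Longrightarrow> dist (gen_iter f x k) z \<le> real_of_ereal (L_sq q f) * (max (real_of_ereal (L_sq q f)) q)^(k-1)/(1 - max (real_of_ereal (L_sq q f)) q) * d_sq q (xtilde f x 1) (xtilde f x 0)"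
    by (rule F(2))
qed

lemma pq_main:
  fixes f :: "(nat \<Rightarrow> 'a::metric_space) \<Rightarrow> 'a"
  assumes q: "0 < q" "q < 1" and p: "1 \<le> p" and lt: "L_pq p q f < ereal ((1 - q) powr (1 / p))"
    and fp: "f (\<lambda>_. z) = z" and x: "x \<in> linf"
  shows "(\<lambda>k. gen_iter f x (Suc k)) \<longlonglongrightarrow> z"
    and "\<And>k. k \<ge> 1 \<Longrightarrow> dist (gen_iter f x k) z \<le> real_of_ereal (L_pq p q f) * (real_of_ereal (L_pq p q f) powr p + q) powr ((real k - 1) / p) / (1 - (real_of_ereal (L_pq p q f) powr p + q) powr (1 / p)) * d_pq p q (xtilde f x 1) (xtilde f x 0)"
proof -
  note P = pq_props[OF q p lt]
  define L where "L = real_of_ereal (L_pq p q f)"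
  define N where "N = L powr p + q"
  define M where "M = N powr (1/p)"
  have p0: "0 < p" using p by simp
  have L0: "0 \<le> L" using P L_def by simp
  have N0: "0 < N" unfolding N_def using q by (simp add: add_nonneg_pos)
  have "L powr p < ((1 - q) powr (1 / p)) powr p"
    using P L_def L0 p0 by (intro powr_less_mono2) auto
  also have "\<dots> = 1 - q" using q p0 by (simp add: powr_powr)
  finally have N1: "N < 1" unfolding N_def by simp
  have M0: "0 \<le> M" unfolding M_def by simp
  have M1: "M < 1" unfolding M_def using N0 N1 p0
    by (metis powr_less_mono2 powr_one_eq_one zero_less_divide_1_iff less_eq_real_def)
  have Dnn: "\<And>u v :: nat \<Rightarrow> 'a. u\<in>linf \<Longrightarrow> v\<in>linf \<Longrightarrow> 0 \<le> d_pq p q u v" by (rule pq_nonneg)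
  have lipf: "\<And>u v :: nat \<Rightarrow> 'a. u\<in>linf \<Longrightarrow> v\<in>linf \<Longrightarrow> dist (f u) (f v) \<le> L * d_pq p q u v"
    using P L_def by simp
  have lipt: "\<And>u v :: nat \<Rightarrow> 'a. u\<in>linf \<Longrightarrow> v\<in>linf \<Longrightarrow> d_pq p q (ftilde f u) (ftilde f v) \<le> M * d_pq p q u v"
  proof -
    fix u v :: "nat \<Rightarrow> 'a" assume u: "u\<in>linf" and v: "v\<in>linf"
    show "d_pq p q (ftilde f u) (ftilde f v) \<le> M * d_pq p q u v"
      unfolding M_def N_def by (rule pq_tilde[OF u v q p L0 lipf[OF u v]])
  qed
  note F = framework[of "d_pq p q" f L M, OF Dnn lipf lipt L0 M0 M1 fp x]
  show "(\<lambda>k. gen_iter f x (Suc k)) \<longlonglongrightarrow> z" by (rule F(1))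
  fix k :: nat assume k: "k \<ge> 1"
  have "M^(k-1) = M powr real (k-1)" using N0 unfolding M_def by (simp add: powr_realpow)
  also have "\<dots> = N powr ((real k - 1) / p)" unfolding M_def using k by (simp add: powr_powr of_nat_diff)
  finally have Mk: "M^(k-1) = N powr ((real k - 1) / p)" .
  show "dist (gen_iter f x k) z \<le> real_of_ereal (L_pq p q f) * (real_of_ereal (L_pq p q f) powr p + q) powr ((real k - 1) / p) / (1 - (real_of_ereal (L_pq p q f) powr p + q) powr (1 / p)) * d_pq p q (xtilde f x 1) (xtilde f x 0)"
    using framework(2)[of "d_pq p q" f L M z x k, OF Dnn lipf lipt L0 M0 M1 fp x k] Mk unfolding L_def[symmetric] N_def[symmetric] M_def[symmetric] by simp
qed

theorem mainTheorem11:
  fixes f :: "(nat \<Rightarrow> 'a::complete_space) \<Rightarrow> 'a"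
  assumes cond: "(\<exists>q. 0 < q \<and> q < 1 \<and> L_sq q f < 1) \<or>
                 (\<exists>q p. 0 < q \<and> q < 1 \<and> 1 \<le> p \<and> L_pq p q f < ereal ((1 - q) powr (1 / p)))"
  shows "\<exists>z. GCFP f z \<and>
    (\<forall>x\<in>linf. \<forall>k::nat. k \<ge> 1 \<longrightarrow>
       (\<forall>q. 0 < q \<and> q < 1 \<and> L_sq q f < 1 \<longrightarrow>
          (let L = real_of_ereal (L_sq q f); M = max L q in
           dist (gen_iter f x k) z \<le> L * M ^ (k - 1) / (1 - M) * d_sq q (xtilde f x 1) (xtilde f x 0))) \<and>
       (\<forall>q p. 0 < q \<and> q < 1 \<and> 1 \<le> p \<and> L_pq p q f < ereal ((1 - q) powr (1 / p)) \<longrightarrow>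
          (let L = real_of_ereal (L_pq p q f); M = L powr p + q in
           dist (gen_iter f x k) z \<le> L * M powr ((real k - 1) / p) / (1 - M powr (1 / p))
              * d_pq p q (xtilde f x 1) (xtilde f x 0))))"
proof -
  obtain z where fp: "f (\<lambda>_. z) = z"
  proof -
    from cond show ?thesis
    proof
      assume "\<exists>q. 0 < q \<and> q < 1 \<and> L_sq q f < 1"
      then obtain q where q: "0 < q" "q < 1" and lt: "L_sq q f < 1" by blast
      note P = sq_props[OF q lt]
      define L where "L = real_of_ereal (L_sq q f)"
      have "\<exists>!w. f (\<lambda>_. w) = w"
      proof (rule banach_fix_type[of L])
        show "0 \<le> L" "L < 1" using P L_def by auto
        show "\<forall>w w'. dist (f (\<lambda>_. w)) (f (\<lambda>_. w')) \<le> L * dist w w'"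
        proof (intro allI)
          fix w w' :: 'a
          have "dist (f (\<lambda>_. w)) (f (\<lambda>_. w')) \<le> L * d_sq q (\<lambda>_. w) (\<lambda>_. w')"
            unfolding L_def by (rule P(3)[OF const_linf const_linf])
          also have "\<dots> \<le> L * dist w w'"
            using P(1) sq_const[of q w w'] q L_def by (intro mult_left_mono) auto
          finally show "dist (f (\<lambda>_. w)) (f (\<lambda>_. w')) \<le> L * dist w w'" .
        qed
      qed
      thus ?thesis using that by auto
    next
      assume "\<exists>q p. 0 < q \<and> q < 1 \<and> 1 \<le> p \<and> L_pq p q f < ereal ((1 - q) powr (1 / p))"
      then obtain q p where q: "0 < q" "q < 1" and p: "1 \<le> p"
        and lt: "L_pq p q f < ereal ((1 - q) powr (1 / p))" by blast
      note P = pq_props[OF q p lt]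
      define L where "L = real_of_ereal (L_pq p q f)"
      define c where "c = (1/(1-q)) powr (1/p)"
      have cpos: "0 < (1 - q) powr (1/p)" using q by simp
      have c: "c = 1 / (1 - q) powr (1/p)" unfolding c_def using q by (simp add: powr_divide)
      have "L < (1 - q) powr (1/p)" using P L_def by simp
      hence "L / (1 - q) powr (1/p) < 1" using cpos by simp
      hence Lc: "L * c < 1" using c by simp
      have "\<exists>!w. f (\<lambda>_. w) = w"
      proof (rule banach_fix_type[of "L * c"])
        show "0 \<le> L * c" using P L_def c cpos by simp
        show "L * c < 1" by (rule Lc)
        show "\<forall>w w'. dist (f (\<lambda>_. w)) (f (\<lambda>_. w')) \<le> L * c * dist w w'"
        proof (intro allI)
          fix w w' :: 'a
          have "dist (f (\<lambda>_. w)) (f (\<lambda>_. w')) \<le> L * d_pq p q (\<lambda>_. w) (\<lambda>_. w')"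
            unfolding L_def by (rule P(3)[OF const_linf const_linf])
          also have "\<dots> = L * c * dist w w'"
            using pq_const[OF q, of p w w'] p unfolding c_def by simp
          finally show "dist (f (\<lambda>_. w)) (f (\<lambda>_. w')) \<le> L * c * dist w w'" .
        qed
      qed
      thus ?thesis using that by auto
    qed
  qed
  have conv: "(\<lambda>k. gen_iter f x (Suc k)) \<longlonglongrightarrow> z" if x: "x \<in> linf" for x
    using cond
  proof
    assume "\<exists>q. 0 < q \<and> q < 1 \<and> L_sq q f < 1"
    then obtain q where q: "0 < q" "q < 1" and lt: "L_sq q f < 1" by blast
    show ?thesis by (rule sq_main(1)[OF q lt fp x])
  next
    assume "\<exists>q p. 0 < q \<and> q < 1 \<and> 1 \<le> p \<and> L_pq p q f < ereal ((1 - q) powr (1 / p))"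
    then obtain q p where q: "0 < q" "q < 1" and p: "1 \<le> p"
      and lt: "L_pq p q f < ereal ((1 - q) powr (1 / p))" by blast
    show ?thesis by (rule pq_main(1)[OF q p lt fp x])
  qed
  have G: "GCFP f z" unfolding GCFP_def gen_fixed_point_def using fp conv by blast
  show ?thesis
  proof (rule exI[of _ z], intro conjI G ballI allI impI)
    fix x :: "nat \<Rightarrow> 'a" and k :: nat and q :: real
    assume x: "x \<in> linf" and k: "1 \<le> k" and h: "0 < q \<and> q < 1 \<and> L_sq q f < 1"
    show "let L = real_of_ereal (L_sq q f); M = max L q in
           dist (gen_iter f x k) z \<le> L * M ^ (k - 1) / (1 - M) * d_sq q (xtilde f x 1) (xtilde f x 0)"
      unfolding Let_def using sq_main(2)[of q f z x k] h fp x k by blast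
  next
    fix x :: "nat \<Rightarrow> 'a" and k :: nat and q p :: real
    assume x: "x \<in> linf" and k: "1 \<le> k"
      and h: "0 < q \<and> q < 1 \<and> 1 \<le> p \<and> L_pq p q f < ereal ((1 - q) powr (1 / p))"
    show "let L = real_of_ereal (L_pq p q f); M = L powr p + q in
           dist (gen_iter f x k) z \<le> L * M powr ((real k - 1) / p) / (1 - M powr (1 / p))
              * d_pq p q (xtilde f x 1) (xtilde f x 0)"
      unfolding Let_def using pq_main(2)[of q p f z x k] h fp x k by blast
  qed
qed

end
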